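(* Let $\mathcal{V}$ be a finite vocabulary, fix a decoding context $c$, and let $P(\cdot\mid c)$ be a probability distribution on $\mathcal{V}$ with $p_t := P(t\mid c) > 0$ for all $t \in \mathcal{V}$. Let $\mathcal{V}$ be partitioned into $n \ge 1$ buckets, and let the required bucket $B$ be drawn uniformly at random from the $n$ buckets. Let $t^\star$ denote the token of highest $P(\cdot\mid c)$-probability within the required bucket $B$ (so $t^\star$ is a random token determined by $B$). For each possible value of $t^\star$, let $Q(\cdot\mid c)$ be any probability distribution on $\mathcal{V}$ satisfying $Q(t^\star\mid c) \ge Q(t\mid c)$ for all $t \in \mathcal{V}$, and let $Z_{t^\star}$ be defined as in the context below. Then \[ \mathbb{E}_{t^\star}\bigl[D_{\mathrm{KL}}(Q(\cdot\mid c)\,\|\,P(\cdot\mid c))\bigr] \;\ge\; \frac{n-1}{n}\,\mathbb{E}_{t^\star}\bigl[\log(1/Z_{t^\star})\bigr], \] where $Z_{t^\star} = (k+1)r + \sum_{t \in \mathcal{U}} p_t$ and $r = \bigl(p_{t^\star}\prod_{t \in \mathcal{C}} p_t\bigr)^{1/(k+1)}$ is the geometric mean of the pooled probabilities.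
   Context: $D_{\mathrm{KL}}(Q\|P) = \sum_{t} Q(t)\log\frac{Q(t)}{P(t)}$ (natural logarithm). For a fixed token $t^\star$, let $Q^*$ be the distribution minimizing $D_{\mathrm{KL}}(Q\|P(\cdot\mid c))$ over all probability distributions $Q$ on $\mathcal{V}$ with $Q(t^\star) \ge Q(t)$ for all $t\in\mathcal{V}$ (i.e., $t^\star$ is an argmax of $Q$). The "pooled" set is $\mathcal{C} := \{t \neq t^\star : Q^*(t) = Q^*(t^\star)\}$, with $k := |\mathcal{C}|$, and the "unpooled" set is $\mathcal{U} := \{t \neq t^\star : Q^*(t) < Q^*(t^\star)\}$. The quantities $r$ and $Z_{t^\star}$ are computed from these sets for the given $t^\star$. The expectation $\mathbb{E}_{t^\star}$ is over the uniformly random required bucket. *)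

theory Defs
  imports Complex_Main
begin

text \<open>Probability distributions on a finite vocabulary V, represented as
  real-valued functions (values outside V are irrelevant for KL).\<close>

definition is_dist :: "'a set \<Rightarrow> ('a \<Rightarrow> real) \<Rightarrow> bool" where
  "is_dist V Q \<longleftrightarrow> (\<forall>t\<in>V. 0 \<le> Q t) \<and> (\<Sum>t\<in>V. Q t) = 1"

definition KL :: "'a set \<Rightarrow> ('a \<Rightarrow> real) \<Rightarrow> ('a \<Rightarrow> real) \<Rightarrow> real" where
  "KL V Q P = (\<Sum>t\<in>V. if Q t = 0 then 0 else Q t * ln (Q t / P t))"

definition argmax_feasible :: "'a set \<Rightarrow> 'a \<Rightarrow> ('a \<Rightarrow> real) set" where
  "argmax_feasible V s = {Q. is_dist V Q \<and> (\<forall>t. t \<notin> V \<longrightarrow> Q t = 0) \<and> (\<forall>t\<in>V. Q t \<le> Q s)}"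

text \<open>The KL minimizer Q* (unique by strict convexity).\<close>
definition Qstar :: "'a set \<Rightarrow> ('a \<Rightarrow> real) \<Rightarrow> 'a \<Rightarrow> ('a \<Rightarrow> real)" where
  "Qstar V P s = (THE Q. Q \<in> argmax_feasible V s \<and>
       (\<forall>Q'\<in>argmax_feasible V s. KL V Q P \<le> KL V Q' P))"

definition pooled :: "'a set \<Rightarrow> ('a \<Rightarrow> real) \<Rightarrow> 'a \<Rightarrow> 'a set" where
  "pooled V P s = {t\<in>V. t \<noteq> s \<and> Qstar V P s t = Qstar V P s s}"

definition unpooled :: "'a set \<Rightarrow> ('a \<Rightarrow> real) \<Rightarrow> 'a \<Rightarrow> 'a set" where
  "unpooled V P s = {t\<in>V. t \<noteq> s \<and> Qstar V P s t < Qstar V P s s}"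

definition geo_r :: "'a set \<Rightarrow> ('a \<Rightarrow> real) \<Rightarrow> 'a \<Rightarrow> real" where
  "geo_r V P s = (P s * (\<Prod>t\<in>pooled V P s. P t)) powr (1 / (real (card (pooled V P s)) + 1))"

definition Zt :: "'a set \<Rightarrow> ('a \<Rightarrow> real) \<Rightarrow> 'a \<Rightarrow> real" where
  "Zt V P s = (real (card (pooled V P s)) + 1) * geo_r V P s + (\<Sum>t\<in>unpooled V P s. P t)"

end

theory Submission
  imports Defs "HOL-Analysis.Analysis"
begin

definition gg :: "real \<Rightarrow> real \<Rightarrow> real" where
  "gg p x = (if x = 0 then 0 else x * ln (x / p))"

lemma KL_gg: "KL V Q P = (\<Sum>t\<in>V. gg (P t) (Q t))"
  unfolding KL_def gg_def by simp

lemma gg_alt: "gg p x = x * ln (x / p)"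
  unfolding gg_def by simp

lemma term_lb:
  assumes "0 \<le> a" "0 < b" "0 < c"
  shows "a * ln c + a - b * c \<le> gg b a"
proof (cases "a = 0")
  case True then show ?thesis using assms by (simp add: gg_def)
next
  case False
  then have a: "0 < a" using assms by simp
  have pos: "0 < b * c / a" using a assms by simp
  have "ln (b * c / a) \<le> b * c / a - 1" using pos by (rule ln_le_minus_one)
  then have "a * ln (b * c / a) \<le> a * (b * c / a - 1)" using a by (simp add: mult_left_mono)
  also have "a * (b * c / a - 1) = b * c - a" using a by (simp add: field_simps)
  also have "ln (b * c / a) = ln b + ln c - ln a" using a assms by (simp add: ln_div ln_mult)
  finally have E1: "a * (ln b + ln c - ln a) \<le> b * c - a" .
  have E3: "gg b a = a * (ln a - ln b)" using a assms False by (simp add: gg_def ln_div)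
  show ?thesis using E1 unfolding E3 by (simp add: algebra_simps)
qed

lemma term_lb_strict:
  assumes "0 \<le> a" "0 < b" "0 < c" "a \<noteq> b * c"
  shows "a * ln c + a - b * c < gg b a"
proof (cases "a = 0")
  case True then show ?thesis using assms by (simp add: gg_def)
next
  case False
  then have a: "0 < a" using assms by simp
  have pos: "0 < b * c / a" using a assms by simp
  have ne: "b * c / a \<noteq> 1" using a assms by (auto simp: field_simps)
  have "ln (b * c / a) \<noteq> b * c / a - 1" using ln_eq_minus_one[OF pos] ne by blast
  then have "ln (b * c / a) < b * c / a - 1" using ln_le_minus_one[OF pos] by linarith
  then have "a * ln (b * c / a) < a * (b * c / a - 1)" using a by (simp add: mult_strict_left_mono)
  also have "a * (b * c / a - 1) = b * c - a" using a by (simp add: field_simps)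
  also have "ln (b * c / a) = ln b + ln c - ln a" using a assms by (simp add: ln_div ln_mult)
  finally have E1: "a * (ln b + ln c - ln a) < b * c - a" .
  have E3: "gg b a = a * (ln a - ln b)" using a assms False by (simp add: gg_def ln_div)
  show ?thesis using E1 unfolding E3 by (simp add: algebra_simps)
qed

lemma mid_le:
  assumes "0 < p" "0 \<le> x" "0 \<le> y"
  shows "gg p ((x + y) / 2) \<le> (gg p x + gg p y) / 2"
proof (cases "x = y")
  case True then show ?thesis by simp
next
  case False
  define m where "m = (x + y) / 2"
  have m: "0 < m" using assms False unfolding m_def by (cases "x < y") auto
  have c: "0 < m / p" using m assms by simp
  have pm: "p * (m / p) = m" using assms by simp
  define L where "L = ln (m / p)"
  have A: "x * L + x - m \<le> gg p x" using term_lb[OF assms(2,1) c] pm by (simp add: L_def)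
  have B: "y * L + y - m \<le> gg p y" using term_lb[OF assms(3,1) c] pm by (simp add: L_def)
  have G0: "gg p m = m * L" by (simp add: gg_alt L_def)
  have G1: "m * L = (x * L + y * L) / 2" by (simp add: m_def field_simps)
  have G: "gg p m = (x * L + y * L) / 2" using G0 G1 by simp
  have "x + y = 2 * m" by (simp add: m_def)
  then have "x * L + y * L \<le> gg p x + gg p y" using A B by linarith
  then show ?thesis unfolding m_def[symmetric] G by (rule divide_right_mono) simp
qed

lemma mid_less:
  assumes "0 < p" "0 \<le> x" "0 \<le> y" "x \<noteq> y"
  shows "gg p ((x + y) / 2) < (gg p x + gg p y) / 2"
proof -
  define m where "m = (x + y) / 2"
  have m: "0 < m" using assms unfolding m_def by (cases "x < y") auto
  have c: "0 < m / p" using m assms by simp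
  have pm: "p * (m / p) = m" using assms by simp
  define L where "L = ln (m / p)"
  have "x \<noteq> p * (m / p)" using assms pm by (simp add: m_def)
  then have A: "x * L + x - m < gg p x" using term_lb_strict[OF assms(2,1) c] pm by (simp add: L_def)
  have B: "y * L + y - m \<le> gg p y" using term_lb[OF assms(3,1) c] pm by (simp add: L_def)
  have G0: "gg p m = m * L" by (simp add: gg_alt L_def)
  have G1: "m * L = (x * L + y * L) / 2" by (simp add: m_def field_simps)
  have G: "gg p m = (x * L + y * L) / 2" using G0 G1 by simp
  have "x + y = 2 * m" by (simp add: m_def)
  then have "x * L + y * L < gg p x + gg p y" using A B by linarith
  then show ?thesis unfolding m_def[symmetric] G by (rule divide_strict_right_mono) simp
qed

lemma xlnx_lb:
  assumes "0 < (x::real)" shows "- (2 * sqrt x) \<le> x * ln x"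
proof -
  have s: "0 < sqrt x" using assms by simp
  have "ln (1 / sqrt x) \<le> 1 / sqrt x - 1" using s by (intro ln_le_minus_one) simp
  then have "- ln (sqrt x) \<le> 1 / sqrt x - 1" using s by (simp add: ln_div)
  moreover have "ln x = 2 * ln (sqrt x)" using assms by (simp add: ln_sqrt)
  ultimately have "ln x \<ge> 2 - 2 / sqrt x" by (simp add: field_simps)
  then have "x * ln x \<ge> x * (2 - 2 / sqrt x)" using assms by (simp add: mult_left_mono)
  also have "x * (2 - 2 / sqrt x) = 2 * x - 2 * sqrt x" using assms s
  proof -
    have xx: "x = sqrt x * sqrt x" using assms by simp
    have "x * (2 / sqrt x) = 2 * sqrt x" using s by (subst xx) (simp add: field_simps)
    then show ?thesis by (simp add: right_diff_distrib)
  qed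
  finally show ?thesis using assms by linarith
qed

lemma xlnx_tendsto: "((\<lambda>x::real. x * ln x) \<longlongrightarrow> 0) (at_right 0)"
proof (rule tendsto_sandwich[where f="\<lambda>x. - (2 * sqrt x)" and h="\<lambda>x. 0"])
  show "\<forall>\<^sub>F x in at_right 0. - (2 * sqrt x) \<le> x * ln x"
    unfolding eventually_at_right_field by (intro exI[of _ 1]) (auto intro: xlnx_lb)
  show "\<forall>\<^sub>F x in at_right 0. x * ln x \<le> (0::real)"
    unfolding eventually_at_right_field by (intro exI[of _ 1]) (auto simp: mult_nonneg_nonpos)
  have "((\<lambda>x::real. - (2 * sqrt x)) \<longlongrightarrow> - (2 * sqrt 0)) (at_right 0)"
    by (intro tendsto_intros tendsto_ident_at)
  then show "((\<lambda>x::real. - (2 * sqrt x)) \<longlongrightarrow> 0) (at_right 0)" by simp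
qed simp
lemma gg_cont:
  assumes p: "0 < p"
  shows "continuous_on {0..} (gg p)"
proof -
  have geq: "gg p = (\<lambda>y. y * ln (y / p))" by (rule ext) (simp add: gg_alt)
  have "continuous (at x within {0..}) (gg p)" if x: "x \<in> {0..}" for x
  proof (cases "x = 0")
    case True
    have "((\<lambda>x. x * ln x - x * ln p) \<longlongrightarrow> 0 - 0 * ln p) (at_right 0)"
      by (intro tendsto_intros xlnx_tendsto tendsto_ident_at)
    then have "((\<lambda>x. x * ln x - x * ln p) \<longlongrightarrow> 0) (at_right 0)" by simp
    moreover have "\<forall>\<^sub>F y in at_right 0. y * ln y - y * ln p = gg p y"
    proof -
      have pt: "y * ln y - y * ln p = gg p y" if y: "0 < y" for y
      proof -
        have "ln (y / p) = ln y - ln p" using y p by (simp add: ln_div)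
        then show ?thesis unfolding gg_alt by (simp only: right_diff_distrib)
      qed
      have "\<forall>\<^sub>F y in at_right (0::real). 0 < y" by (rule eventually_at_right_less)
      then show ?thesis by (rule eventually_mono) (rule pt)
    qed
    ultimately have "(gg p \<longlongrightarrow> 0) (at_right 0)" by (rule Lim_transform_eventually)
    moreover have g0: "gg p 0 = 0" by (simp add: gg_def)
    ultimately have "(gg p \<longlongrightarrow> gg p 0) (at 0 within {0..})"
      by (simp only: at_within_Ici_at_right)
    then show ?thesis using True by (simp only: continuous_within)
  next
    case False
    then have x0: "0 < x" using x by simp
    have "isCont (\<lambda>y. y * ln (y / p)) x"
      by (rule isCont_mult[OF continuous_ident isCont_ln'[OF isCont_divide[OF continuous_ident continuous_const]]])
         (use x0 p in auto)
    then have "isCont (gg p) x" unfolding geq .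
    then show ?thesis by (rule continuous_at_imp_continuous_at_within)
  qed
  then show ?thesis by (simp add: continuous_on_eq_continuous_within)
qed

lemma feasible_closed: "closed (argmax_feasible V s)"
proof -
  have eq: "argmax_feasible V s = (\<Inter>t\<in>V. {Q. 0 \<le> Q t}) \<inter> {Q. sum Q V = 1} \<inter>
     (\<Inter>t\<in>-V. {Q. Q t = 0}) \<inter> (\<Inter>t\<in>V. {Q. Q t \<le> Q s})"
    unfolding argmax_feasible_def is_dist_def by auto
  have co: "continuous_on UNIV (\<lambda>Q::'a\<Rightarrow>real. Q t)" for t
    by (rule continuous_on_product_coordinates)
  have c1: "closed {Q::'a\<Rightarrow>real. 0 \<le> Q t}" for t
    by (rule closed_Collect_le[OF continuous_on_const co])
  have c2: "closed {Q::'a\<Rightarrow>real. sum Q V = 1}"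
    by (rule closed_Collect_eq[OF continuous_on_sum[OF co] continuous_on_const])
  have c3: "closed {Q::'a\<Rightarrow>real. Q t = 0}" for t
    by (rule closed_Collect_eq[OF co continuous_on_const])
  have c4: "closed {Q::'a\<Rightarrow>real. Q t \<le> Q s}" for t
    by (rule closed_Collect_le[OF co co])
  show ?thesis unfolding eq
    by (intro closed_INT closed_Int ballI c1 c2 c3 c4)
qed

lemma feasible_compact: assumes fin: "finite V" shows "compact (argmax_feasible V s)"
proof -
  define K where "K = PiE UNIV (\<lambda>t. if t \<in> V then {0..1} else {0::real})"
  have "compactin (product_topology (\<lambda>i. euclidean) UNIV) K"
    unfolding K_def compactin_PiE by auto
  then have cK: "compact K" by (simp add: euclidean_product_topology)
  have sub: "argmax_feasible V s \<subseteq> K"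
  proof
    fix Q assume Q: "Q \<in> argmax_feasible V s"
    have "Q t \<in> (if t \<in> V then {0..1} else {0})" for t
    proof (cases "t \<in> V")
      case True
      have "Q t \<le> sum Q V" using Q True fin unfolding argmax_feasible_def is_dist_def
        by (intro member_le_sum) auto
      then show ?thesis using Q True unfolding argmax_feasible_def is_dist_def by auto
    qed (use Q in \<open>auto simp: argmax_feasible_def\<close>)
    then show "Q \<in> K" unfolding K_def by (auto simp: PiE_def Pi_def extensional_def)
  qed
  have "argmax_feasible V s = K \<inter> argmax_feasible V s" using sub by auto
  then show ?thesis using compact_Int_closed[OF cK feasible_closed[of V s]] by simp
qed


lemma KL_cont:
  assumes Ppos: "\<forall>t\<in>V. 0 < P t"
  shows "continuous_on (argmax_feasible V s) (\<lambda>Q. KL V Q P)"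
  unfolding KL_gg
proof (rule continuous_on_sum)
  fix t assume t: "t \<in> V"
  show "continuous_on (argmax_feasible V s) (\<lambda>Q. gg (P t) (Q t))"
  proof (rule continuous_on_compose2[OF gg_cont])
    show "0 < P t" using Ppos t by simp
    show "continuous_on (argmax_feasible V s) (\<lambda>Q. Q t)"
      by (rule continuous_on_subset[OF continuous_on_product_coordinates]) simp
    show "(\<lambda>Q. Q t) ` argmax_feasible V s \<subseteq> {0..}"
      using t by (auto simp: argmax_feasible_def is_dist_def)
  qed
qed

lemma feasible_nonempty:
  assumes fin: "finite V" and s: "s \<in> V"
  shows "(\<lambda>t. if t = s then 1 else 0) \<in> argmax_feasible V s"
  using fin s by (auto simp: argmax_feasible_def is_dist_def)

lemma minimizer_unique:
  assumes fin: "finite V" and s: "s \<in> V" and Ppos: "\<forall>t\<in>V. 0 < P t"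
  shows "\<exists>!Q. Q \<in> argmax_feasible V s \<and> (\<forall>Q'\<in>argmax_feasible V s. KL V Q P \<le> KL V Q' P)"
proof (rule ex_ex1I)
  show "\<exists>Q. Q \<in> argmax_feasible V s \<and> (\<forall>Q'\<in>argmax_feasible V s. KL V Q P \<le> KL V Q' P)"
    using continuous_attains_inf[OF feasible_compact[OF fin] _ KL_cont[OF Ppos]]
      feasible_nonempty[OF fin s] by blast
next
  fix Q1 Q2
  assume A1: "Q1 \<in> argmax_feasible V s \<and> (\<forall>Q'\<in>argmax_feasible V s. KL V Q1 P \<le> KL V Q' P)"
     and A2: "Q2 \<in> argmax_feasible V s \<and> (\<forall>Q'\<in>argmax_feasible V s. KL V Q2 P \<le> KL V Q' P)"
  show "Q1 = Q2"
  proof (rule ccontr)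
    assume ne: "Q1 \<noteq> Q2"
    then obtain t0 where t0: "Q1 t0 \<noteq> Q2 t0" by blast
    have z1: "\<forall>t. t \<notin> V \<longrightarrow> Q1 t = 0" and z2: "\<forall>t. t \<notin> V \<longrightarrow> Q2 t = 0"
      using A1 A2 unfolding argmax_feasible_def by auto
    have t0V: "t0 \<in> V"
    proof (rule ccontr)
      assume "t0 \<notin> V"
      then have "Q1 t0 = 0" "Q2 t0 = 0" using z1 z2 by auto
      then show False using t0 by simp
    qed
    define Qm where "Qm = (\<lambda>t. (Q1 t + Q2 t) / 2)"
    have nn1: "\<forall>t\<in>V. 0 \<le> Q1 t" and nn2: "\<forall>t\<in>V. 0 \<le> Q2 t"
      using A1 A2 unfolding argmax_feasible_def is_dist_def by auto
    have "Qm \<in> argmax_feasible V s"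
    proof -
      have "sum Qm V = (sum Q1 V + sum Q2 V) / 2"
        unfolding Qm_def by (simp add: sum_divide_distrib[symmetric] sum.distrib)
      then show ?thesis using A1 A2 unfolding argmax_feasible_def is_dist_def Qm_def
        by (auto simp: add_mono)
    qed
    then have le1: "KL V Q1 P \<le> KL V Qm P" and le2: "KL V Q2 P \<le> KL V Qm P" using A1 A2 by auto
    have "KL V Qm P < (\<Sum>t\<in>V. (gg (P t) (Q1 t) + gg (P t) (Q2 t)) / 2)"
      unfolding KL_gg Qm_def
    proof (rule sum_strict_mono_ex1[OF fin])
      show "\<forall>t\<in>V. gg (P t) ((Q1 t + Q2 t) / 2) \<le> (gg (P t) (Q1 t) + gg (P t) (Q2 t)) / 2"
        using Ppos nn1 nn2 mid_le by blast
      show "\<exists>t\<in>V. gg (P t) ((Q1 t + Q2 t) / 2) < (gg (P t) (Q1 t) + gg (P t) (Q2 t)) / 2"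
        using Ppos nn1 nn2 t0V t0 mid_less by blast
    qed
    also have "\<dots> = (KL V Q1 P + KL V Q2 P) / 2"
      unfolding KL_gg by (simp add: sum_divide_distrib[symmetric] sum.distrib)
    finally show False using le1 le2 by argo
  qed
qed

lemma Qstar_min:
  assumes fin: "finite V" and s: "s \<in> V" and Ppos: "\<forall>t\<in>V. 0 < P t"
  shows "Qstar V P s \<in> argmax_feasible V s"
    and "\<And>Q'. Q' \<in> argmax_feasible V s \<Longrightarrow> KL V (Qstar V P s) P \<le> KL V Q' P"
  using theI'[OF minimizer_unique[OF assms]] unfolding Qstar_def[symmetric] by auto


lemma Zt_bound:
  assumes fin: "finite V" and s: "s \<in> V" and Ppos: "\<forall>t\<in>V. 0 < P t" and Pdist: "is_dist V P"
  shows "0 < Zt V P s \<and> Zt V P s \<le> 1 \<and> - ln (Zt V P s) \<le> KL V (Qstar V P s) P"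
proof -
  define q where "q = Qstar V P s"
  have qF: "q \<in> argmax_feasible V s" using Qstar_min(1)[OF fin s Ppos] unfolding q_def .
  have qnn: "\<forall>t\<in>V. 0 \<le> q t" and qsum: "sum q V = 1" and qle: "\<forall>t\<in>V. q t \<le> q s"
    using qF by (auto simp: argmax_feasible_def is_dist_def)
  have Psum: "sum P V = 1" using Pdist by (simp add: is_dist_def)
  define m where "m = q s"
  define C where "C = pooled V P s"
  define U where "U = unpooled V P s"
  have C_eq: "C = {t\<in>V. t \<noteq> s \<and> q t = m}" unfolding C_def pooled_def q_def m_def by simp
  have U_eq: "U = {t\<in>V. t \<noteq> s \<and> q t < m}" unfolding U_def unpooled_def q_def m_def by simp
  have CV: "C \<subseteq> V" and UV: "U \<subseteq> V" unfolding C_eq U_eq by auto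
  have finC: "finite C" and finU: "finite U" using CV UV fin finite_subset by auto
  have sC: "s \<notin> C" and sU: "s \<notin> U" and CU: "C \<inter> U = {}" unfolding C_eq U_eq by auto
  have Vdec: "V = insert s (C \<union> U)"
  proof
    show "insert s (C \<union> U) \<subseteq> V" using s CV UV by auto
    show "V \<subseteq> insert s (C \<union> U)"
    proof
      fix t assume t: "t \<in> V"
      have "q t \<le> m" using qle t m_def by simp
      then have "q t = m \<or> q t < m" by linarith
      then show "t \<in> insert s (C \<union> U)" using t unfolding C_eq U_eq by auto
    qed
  qed
  have dec: "sum f V = f s + sum f C + sum f U" for f :: "'a \<Rightarrow> real"
  proof -
    have "sum f V = f s + sum f (C \<union> U)"
      by (subst Vdec) (rule sum.insert, use finC finU sC sU in auto)
    also have "sum f (C \<union> U) = sum f C + sum f U"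
      by (rule sum.union_disjoint[OF finC finU CU])
    finally show ?thesis by simp
  qed
  have PposC: "\<forall>t\<in>C. 0 < P t" and PposU: "\<forall>t\<in>U. 0 < P t" using Ppos CV UV by auto
  have Ps: "0 < P s" using Ppos s by simp
  have qC: "\<forall>t\<in>C. q t = m" unfolding C_eq by simp
  have m_pos: "0 < m"
  proof (rule ccontr)
    assume "\<not> 0 < m"
    then have "m \<le> 0" by simp
    have "sum q V \<le> sum (\<lambda>t. 0) V"
      by (rule sum_mono) (use qle m_def \<open>m \<le> 0\<close> in auto)
    then show False using qsum by simp
  qed
  define k where "k = card C"
  define SL where "SL = ln (P s) + (\<Sum>t\<in>C. ln (P t))"
  define r where "r = geo_r V P s"
  have prodpos: "0 < P s * prod P C" using Ps PposC by (simp add: prod_pos)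
  have r_eq: "r = (P s * prod P C) powr (1 / (real k + 1))"
    unfolding r_def geo_r_def C_def[symmetric] k_def ..
  have r_pos: "0 < r" unfolding r_eq using prodpos Ps by (metis mult_eq_0_iff order_less_irrefl powr_gt_zero)
  have "ln r = (1 / (real k + 1)) * ln (P s * prod P C)" unfolding r_eq by (rule ln_powr)
  also have "ln (P s * prod P C) = SL"
  proof -
    have pp: "0 < prod P C" using PposC by (simp add: prod_pos)
    have "ln (P s * prod P C) = ln (P s) + ln (prod P C)" by (rule ln_mult_pos[OF Ps pp])
    also have "ln (prod P C) = (\<Sum>t\<in>C. ln (P t))" by (rule ln_prod[OF finC]) (use PposC in auto)
    finally show ?thesis unfolding SL_def .
  qed
  finally have lnr: "ln r = (1 / (real k + 1)) * SL" .
  have SLr: "SL = (real k + 1) * ln r" unfolding lnr by simp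
  define a where "a = (real k + 1) * r"
  define b where "b = sum P U"
  have a_pos: "0 < a" unfolding a_def using r_pos by simp
  have b_nn: "0 \<le> b" unfolding b_def using PposU by (simp add: sum_nonneg less_imp_le)
  have Z_eq: "Zt V P s = a + b"
    unfolding Zt_def a_def b_def r_def k_def C_def U_def ..
  define Z where "Z = a + b"
  have Z_pos: "0 < Z" unfolding Z_def using a_pos b_nn by simp
  \<comment> \<open>AM-GM: a <= S\<close>
  define S where "S = P s + sum P C"
  have S_pos: "0 < S" unfolding S_def using Ps PposC by (simp add: sum_nonneg less_imp_le add_pos_nonneg)
  define w where "w = 1 / (real k + 1)"
  have w_pos: "0 < w" unfolding w_def by simp
  have wk: "(real k + 1) * w = 1" unfolding w_def by simp
  have gw: "gg (P t) w = w * ln w - w * ln (P t)" if "0 < P t" for t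
    using that w_pos by (simp add: gg_alt ln_div right_diff_distrib)
  define c2 where "c2 = 1 / S"
  have c2_pos: "0 < c2" unfolding c2_def using S_pos by simp
  define lS where "lS = ln c2"
  define lw where "lw = ln w"
  define X where "X = (\<Sum>t\<in>C. ln (P t))"
  have lbw: "w * lS + w - P t * c2 \<le> w * lw - w * ln (P t)" if "0 < P t" for t
    using term_lb[OF less_imp_le[OF w_pos] that c2_pos] gw[OF that] unfolding lS_def lw_def by simp
  have "(\<Sum>t\<in>C. w * lS + w - P t * c2) \<le> (\<Sum>t\<in>C. w * lw - w * ln (P t))"
    by (rule sum_mono) (use lbw PposC in auto)
  moreover have "(\<Sum>t\<in>C. w * lS + w - P t * c2) = real k * (w * lS) + real k * w - sum P C * c2"
    by (simp add: sum.distrib sum_subtractf sum_distrib_right k_def distrib_left)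
  moreover have "(\<Sum>t\<in>C. w * lw - w * ln (P t)) = real k * (w * lw) - w * X"
    by (simp add: sum_subtractf sum_distrib_left k_def X_def)
  ultimately have A1: "real k * (w * lS) + real k * w - sum P C * c2 \<le> real k * (w * lw) - w * X"
    by simp
  have A2: "w * lS + w - P s * c2 \<le> w * lw - w * ln (P s)" using lbw Ps by simp
  have kw: "real k * w = 1 - w" using wk by (simp add: algebra_simps)
  have ek: "real k * (w * z) = z - w * z" for z
  proof -
    have "real k * (w * z) = (real k * w) * z" by (simp only: mult.assoc)
    also have "\<dots> = (1 - w) * z" by (simp only: kw)
    finally show ?thesis by (simp add: left_diff_distrib)
  qed
  have sc: "P s * c2 + sum P C * c2 = 1"
  proof -
    have "P s * c2 + sum P C * c2 = S * c2" unfolding S_def by (simp add: distrib_right)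
    then show ?thesis unfolding c2_def using S_pos by simp
  qed
  have wSL: "w * ln (P s) + w * X = ln r"
  proof -
    have "w * SL = ((real k + 1) * w) * ln r" unfolding SLr by (simp only: mult_ac)
    then have "w * SL = ln r" unfolding wk by simp
    then show ?thesis unfolding SL_def X_def[symmetric] by (simp add: distrib_left)
  qed
  have lSe: "lS = - ln S" unfolding lS_def c2_def using S_pos by (simp add: ln_div)
  have lwe: "lw = - ln (real k + 1)" unfolding lw_def w_def by (simp add: ln_div)
  have lae: "ln a = ln (real k + 1) + ln r" unfolding a_def using r_pos by (simp add: ln_mult)
  have "lS \<le> lw - ln r" using A1 A2 ek[of lS] ek[of lw] kw sc wSL by linarith
  then have "ln a \<le> ln S" using lSe lwe lae by linarith
  then have aS: "a \<le> S" using a_pos S_pos by simp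
  have Z_le: "Z \<le> 1"
  proof -
    have "sum P V = S + b" unfolding dec[of P] S_def b_def by simp
    then show ?thesis unfolding Z_def using aS Psum by linarith
  qed
  define M where "M = (real k + 1) * m"
  define QU where "QU = sum q U"
  have QU_eq: "M + QU = 1"
  proof -
    have "sum q C = real k * m" using qC by (simp add: k_def)
    then show ?thesis using qsum unfolding dec[of q] M_def QU_def m_def[symmetric]
      by (simp add: algebra_simps)
  qed
  define c where "c = 1 / Z"
  have c_pos: "0 < c" unfolding c_def using Z_pos by simp
  have cZ: "a * c + b * c = 1"
  proof -
    have "a * c + b * c = Z * c" unfolding Z_def by (simp add: distrib_right)
    then show ?thesis unfolding c_def using Z_pos by simp
  qed
  have gm: "gg (P t) m = m * ln m - m * ln (P t)" if "0 < P t" for t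
    using that m_pos by (simp add: gg_alt ln_div right_diff_distrib)
  have TC: "gg (P s) (q s) + (\<Sum>t\<in>C. gg (P t) (q t)) = (real k + 1) * (m * ln m) - m * SL"
  proof -
    have "(\<Sum>t\<in>C. gg (P t) (q t)) = (\<Sum>t\<in>C. m * ln m - m * ln (P t))"
      by (rule sum.cong) (use qC gm PposC in auto)
    also have "\<dots> = real k * (m * ln m) - m * (\<Sum>t\<in>C. ln (P t))"
      by (simp add: sum_subtractf sum_distrib_left k_def)
    finally show ?thesis using gm[OF Ps] unfolding m_def[symmetric] SL_def
      by (simp add: algebra_simps)
  qed
  have TC2: "(real k + 1) * (m * ln m) - m * SL = gg a M"
  proof -
    have "M / a = m / r" unfolding M_def a_def by simp
    then have "gg a M = M * (ln m - ln r)" using m_pos r_pos by (simp add: gg_alt ln_div)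
    then show ?thesis unfolding SLr M_def by (simp add: algebra_simps)
  qed
  have M_nn: "0 \<le> M" unfolding M_def using m_pos by simp
  have LM: "M * ln c + M - a * c \<le> gg a M" by (rule term_lb[OF M_nn a_pos c_pos])
  have LU: "(\<Sum>t\<in>U. q t * ln c + q t - P t * c) \<le> (\<Sum>t\<in>U. gg (P t) (q t))"
    by (rule sum_mono) (use term_lb c_pos PposU qnn UV in auto)
  have LU2: "(\<Sum>t\<in>U. q t * ln c + q t - P t * c) = QU * ln c + QU - b * c"
    unfolding QU_def b_def by (simp add: sum.distrib sum_subtractf sum_distrib_right)
  have KLq: "KL V q P = gg (P s) (q s) + (\<Sum>t\<in>C. gg (P t) (q t)) + (\<Sum>t\<in>U. gg (P t) (q t))"
    unfolding KL_gg by (rule dec)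
  have lin: "M * ln c + QU * ln c = ln c" using QU_eq by (metis distrib_right mult_1)
  have "ln c \<le> KL V q P" using KLq TC TC2 LM LU LU2 lin cZ QU_eq by linarith
  moreover have "ln c = - ln Z" unfolding c_def using Z_pos by (simp add: ln_div)
  ultimately show ?thesis using Z_pos Z_le unfolding Z_eq Z_def[symmetric] q_def by simp
qed


theorem theorem7p1:
  fixes V :: "'a set" and P :: "'a \<Rightarrow> real" and n :: nat
    and B :: "nat \<Rightarrow> 'a set" and tstar :: "nat \<Rightarrow> 'a"
    and Q :: "'a \<Rightarrow> 'a \<Rightarrow> real"
  assumes finV: "finite V"
    and Ppos: "\<forall>t\<in>V. 0 < P t"
    and Pdist: "is_dist V P"
    and n_ge: "n \<ge> 1"
    and B_ne: "\<forall>i<n. B i \<noteq> {}"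
    and B_disj: "\<forall>i<n. \<forall>j<n. i \<noteq> j \<longrightarrow> B i \<inter> B j = {}"
    and B_cover: "(\<Union>i<n. B i) = V"
    and tstar_mem: "\<forall>i<n. tstar i \<in> B i"
    and tstar_max: "\<forall>i<n. \<forall>t\<in>B i. P t \<le> P (tstar i)"
    and Q_dist: "\<forall>i<n. is_dist V (Q (tstar i))"
    and Q_argmax: "\<forall>i<n. \<forall>t\<in>V. Q (tstar i) t \<le> Q (tstar i) (tstar i)"
  shows "(\<Sum>i<n. KL V (Q (tstar i)) P) / real n
           \<ge> (real n - 1) / real n * ((\<Sum>i<n. ln (1 / Zt V P (tstar i))) / real n)"
proof -
  have each: "0 \<le> ln (1 / Zt V P (tstar i)) \<and> ln (1 / Zt V P (tstar i)) \<le> KL V (Q (tstar i)) P"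
    if i: "i < n" for i
  proof -
    define s where "s = tstar i"
    have s: "s \<in> V" using tstar_mem B_cover i unfolding s_def by blast
    define Q' where "Q' = (\<lambda>t. if t \<in> V then Q s t else 0)"
    have KLQ': "KL V Q' P = KL V (Q s) P" unfolding KL_def Q'_def by (rule sum.cong) auto
    have "Q' \<in> argmax_feasible V s"
      using Q_dist Q_argmax i s unfolding argmax_feasible_def is_dist_def Q'_def s_def by auto
    then have le1: "KL V (Qstar V P s) P \<le> KL V (Q s) P"
      using Qstar_min(2)[OF finV s Ppos] KLQ' by metis
    have Zb: "0 < Zt V P s \<and> Zt V P s \<le> 1 \<and> - ln (Zt V P s) \<le> KL V (Qstar V P s) P"
      by (rule Zt_bound[OF finV s Ppos Pdist])
    have l1: "ln (1 / Zt V P s) = - ln (Zt V P s)" using Zb by (simp add: ln_div)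
    have "0 \<le> - ln (Zt V P s)" using Zb by simp
    then show ?thesis using l1 Zb le1 unfolding s_def[symmetric] by linarith
  qed
  define SK where "SK = (\<Sum>i<n. KL V (Q (tstar i)) P)"
  define SL where "SL = (\<Sum>i<n. ln (1 / Zt V P (tstar i)))"
  have SL_nn: "0 \<le> SL" unfolding SL_def by (rule sum_nonneg) (use each in auto)
  have SLK: "SL \<le> SK" unfolding SL_def SK_def by (rule sum_mono) (use each in auto)
  have npos: "0 < real n" using n_ge by simp
  have f1: "0 \<le> (real n - 1) / real n" using n_ge by simp
  have f2: "(real n - 1) / real n \<le> 1" using npos by simp
  have h1: "0 \<le> SL / real n" using SL_nn npos by simp
  have "(real n - 1) / real n * (SL / real n) \<le> SL / real n"
    by (rule mult_left_le_one_le[OF h1 f1 f2])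
  also have "SL / real n \<le> SK / real n" using SLK npos by (simp add: divide_right_mono)
  finally show ?thesis unfolding SK_def SL_def .
qed

end
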